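(* Let $f$ be a $C^1$ diffeomorphism of $M=\mathbb{R}^d/\mathbb{Z}^d$ and let $x\in M$ be regularly hyperbolic with coefficient $0<\lambda<1$. Then for all positive integers $n,m$ with $n>1/\log(1/\lambda)$ and $n>m$, there is a continuous linear operator $\Upsilon:X_n\to X_m$ with $\Upsilon(\Gamma_{o(x)}\eta)=\eta$ and $\Gamma_{o(x)}(\Upsilon\eta)=\eta$ for all $\eta\in X_n$.
   Context: Tangent spaces identified with $\mathbb{R}^d$, $|\cdot|$ Euclidean norm. $o(x)=(f^k(x))_{k}$, $(\Gamma_{\mathbf{x}}\eta)_k=\eta_k-Df(x_{k-1})\eta_{k-1}$; $\|\eta\|_n=\sup_k e^{-|k|/n}|\eta_k|$, $X_n=\{\|\eta\|_n<\infty\}$. A point $x$ is regularly hyperbolic (with coefficient $\lambda\in(0,1)$) if, with $x_k=f^k(x)$, there is a splitting $T_{x_k}M=E^s(x_k)\oplus E^u(x_k)$ with $Df(x_k)E^{s}(x_k)=E^{s}(x_{k+1})$, $Df(x_k)E^{u}(x_k)=E^{u}(x_{k+1})$, and for each sufficiently small $\varepsilon>0$ a constant $c(x,\varepsilon)$ such that for all $k\in\mathbb{Z}$, $j>0$: $|Df^j(x_k)\eta|\le c(x,\varepsilon)\lambda^je^{\varepsilon|k|}|\eta|$ for $\eta\in E^s(x_k)$, $|Df^{-j}(x_k)\eta|\le c(x,\varepsilon)\lambda^je^{\varepsilon|k|}|\eta|$ for $\eta\in E^u(x_k)$, and if $\eta=\eta^s+\eta^u$ is the splitting of $\eta\in T_{x_k}M$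 then $|\eta^s|,|\eta^u|\le c(x,\varepsilon)e^{\varepsilon|k|}|\eta|$. *)

theory Defs
  imports "HOL-Analysis.Analysis"
begin

text \<open>The torus M = R^d / Z^d is represented through lifts: a C^1 diffeomorphism f of M
  is given by a C^1 diffeomorphism F of R^d (with C^1 inverse G) such that F and G
  commute with the integer lattice modulo Z^d. Tangent spaces are identified with R^d.\<close>

definition int_lattice :: "(real^'n) set" where
  "int_lattice = {z. \<forall>i. z $ i \<in> \<int>}"

definition torus_C1_diffeo ::
  "(real^'n \<Rightarrow> real^'n) \<Rightarrow> (real^'n \<Rightarrow> real^'n)
   \<Rightarrow> (real^'n \<Rightarrow> (real^'n) \<Rightarrow>\<^sub>L (real^'n)) \<Rightarrow> (real^'n \<Rightarrow> (real^'n) \<Rightarrow>\<^sub>L (real^'n)) \<Rightarrow> bool" where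
  "torus_C1_diffeo F G DF DG \<longleftrightarrow>
     (\<forall>x. G (F x) = x) \<and> (\<forall>y. F (G y) = y) \<and>
     (\<forall>x. (F has_derivative blinfun_apply (DF x)) (at x)) \<and> continuous_on UNIV DF \<and>
     (\<forall>x. (G has_derivative blinfun_apply (DG x)) (at x)) \<and> continuous_on UNIV DG \<and>
     (\<forall>x z. z \<in> int_lattice \<longrightarrow> F (x + z) - F x \<in> int_lattice) \<and>
     (\<forall>x z. z \<in> int_lattice \<longrightarrow> G (x + z) - G x \<in> int_lattice)"

definition orb :: "('a \<Rightarrow> 'a) \<Rightarrow> ('a \<Rightarrow> 'a) \<Rightarrow> 'a \<Rightarrow> int \<Rightarrow> 'a" where
  "orb F G x k = (if 0 \<le> k then (F ^^ nat k) x else (G ^^ nat (- k)) x)"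

text \<open>Df^j(x_k) (chain rule: product of Df along the orbit) and Df^{-j}(x_k).\<close>
fun Dfwd :: "('a \<Rightarrow> 'a) \<Rightarrow> ('a \<Rightarrow> 'a) \<Rightarrow> ('a \<Rightarrow> 'b \<Rightarrow>\<^sub>L 'b) \<Rightarrow> 'a \<Rightarrow> int \<Rightarrow> nat
     \<Rightarrow> 'b \<Rightarrow> 'b::real_normed_vector" where
  "Dfwd F G DF x k 0 = id"
| "Dfwd F G DF x k (Suc j) = blinfun_apply (DF (orb F G x (k + int j))) \<circ> Dfwd F G DF x k j"

fun Dbwd :: "('a \<Rightarrow> 'a) \<Rightarrow> ('a \<Rightarrow> 'a) \<Rightarrow> ('a \<Rightarrow> 'b \<Rightarrow>\<^sub>L 'b) \<Rightarrow> 'a \<Rightarrow> int \<Rightarrow> nat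
     \<Rightarrow> 'b \<Rightarrow> 'b::real_normed_vector" where
  "Dbwd F G DG x k 0 = id"
| "Dbwd F G DG x k (Suc j) = blinfun_apply (DG (orb F G x (k - int j))) \<circ> Dbwd F G DG x k j"

definition regularly_hyperbolic ::
  "(real^'n \<Rightarrow> real^'n) \<Rightarrow> (real^'n \<Rightarrow> real^'n)
   \<Rightarrow> (real^'n \<Rightarrow> (real^'n) \<Rightarrow>\<^sub>L (real^'n)) \<Rightarrow> (real^'n \<Rightarrow> (real^'n) \<Rightarrow>\<^sub>L (real^'n))
   \<Rightarrow> real \<Rightarrow> real^'n \<Rightarrow> bool" where
  "regularly_hyperbolic F G DF DG lam x \<longleftrightarrow> 0 < lam \<and> lam < 1 \<and>
    (\<exists>Es Eu :: int \<Rightarrow> (real^'n) set.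
       (\<forall>k. subspace (Es k) \<and> subspace (Eu k) \<and> Es k \<inter> Eu k = {0} \<and>
            {a + b | a b. a \<in> Es k \<and> b \<in> Eu k} = UNIV) \<and>
       (\<forall>k. blinfun_apply (DF (orb F G x k)) ` Es k = Es (k + 1)) \<and>
       (\<forall>k. blinfun_apply (DF (orb F G x k)) ` Eu k = Eu (k + 1)) \<and>
       (\<exists>\<epsilon>0>0. \<forall>\<epsilon>. 0 < \<epsilon> \<and> \<epsilon> < \<epsilon>0 \<longrightarrow> (\<exists>c. \<forall>k::int.
          (\<forall>j>0. \<forall>\<eta>\<in>Es k. norm (Dfwd F G DF x k j \<eta>) \<le> c * lam ^ j * exp (\<epsilon> * \<bar>real_of_int k\<bar>) * norm \<eta>) \<and>
          (\<forall>j>0. \<forall>\<eta>\<in>Eu k. norm (Dbwd F G DG x k j \<eta>) \<le> c * lam ^ j * exp (\<epsilon> * \<bar>real_of_int k\<bar>) * norm \<eta>) \<and>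
          (\<forall>\<eta> \<eta>s \<eta>u. \<eta>s \<in> Es k \<longrightarrow> \<eta>u \<in> Eu k \<longrightarrow> \<eta> = \<eta>s + \<eta>u \<longrightarrow>
              norm \<eta>s \<le> c * exp (\<epsilon> * \<bar>real_of_int k\<bar>) * norm \<eta> \<and>
              norm \<eta>u \<le> c * exp (\<epsilon> * \<bar>real_of_int k\<bar>) * norm \<eta>))))"

definition Gamma :: "('a \<Rightarrow> 'a) \<Rightarrow> ('a \<Rightarrow> 'a) \<Rightarrow> ('a \<Rightarrow> 'b \<Rightarrow>\<^sub>L 'b) \<Rightarrow> 'a
     \<Rightarrow> (int \<Rightarrow> 'b) \<Rightarrow> int \<Rightarrow> 'b::real_normed_vector" where
  "Gamma F G DF x \<eta> k = \<eta> k - blinfun_apply (DF (orb F G x (k - 1))) (\<eta> (k - 1))"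

definition wnorm :: "nat \<Rightarrow> (int \<Rightarrow> 'b::real_normed_vector) \<Rightarrow> real" where
  "wnorm n \<eta> = (SUP k. exp (- \<bar>real_of_int k\<bar> / real n) * norm (\<eta> k))"

definition Xsp :: "nat \<Rightarrow> (int \<Rightarrow> 'b::real_normed_vector) set" where
  "Xsp n = {\<eta>. bdd_above (range (\<lambda>k. exp (- \<bar>real_of_int k\<bar> / real n) * norm (\<eta> k)))}"

end

theory Submission
  imports Defs
begin


lemma orb_Suc:
  assumes FG: "\<forall>y. F (G y) = y"
  shows "orb F G x (k+1) = F (orb F G x k)"
proof (cases "k \<ge> 0")
  case True
  then have "nat (k+1) = Suc (nat k)" by simp
  then show ?thesis using True by (simp add: orb_def)
next
  case False
  show ?thesis
  proof (cases "k = -1")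
    case True then show ?thesis using FG by (simp add: orb_def)
  next
    case False2: False
    then have "nat (-k) = Suc (nat (-(k+1)))" using False by simp
    then show ?thesis using False False2 FG by (simp add: orb_def)
  qed
qed

lemma orb_pred:
  assumes GF: "\<forall>y. G (F y) = y" and FG: "\<forall>y. F (G y) = y"
  shows "orb F G x (k-1) = G (orb F G x k)"
  using orb_Suc[of F G x "k-1"] FG GF by simp

lemma deriv_inv:
  assumes GF: "\<forall>y. G (F y) = y"
    and dF: "(F has_derivative f') (at y)" and dG: "(G has_derivative g') (at (F y))"
  shows "g' (f' v) = v"
proof -
  have "((G \<circ> F) has_derivative (g' \<circ> f')) (at y)" by (rule diff_chain_at[OF dF dG])
  moreover have "G \<circ> F = id" using GF by auto
  ultimately have "(id has_derivative (g' \<circ> f')) (at y)" by simp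
  then have "g' \<circ> f' = id" using has_derivative_unique has_derivative_id by blast
  then show ?thesis by (metis comp_apply id_apply)
qed



locale hyp =
  fixes F G :: "real^'d \<Rightarrow> real^'d"
    and DF DG :: "real^'d \<Rightarrow> (real^'d) \<Rightarrow>\<^sub>L (real^'d)" and x :: "real^'d"
    and lam eps c :: real and n m :: nat and Es Eu :: "int \<Rightarrow> (real^'d) set"
  assumes inv1: "\<And>k v. blinfun_apply (DG (orb F G x k)) (blinfun_apply (DF (orb F G x (k-1))) v) = v"
    and inv2: "\<And>k v. blinfun_apply (DF (orb F G x (k-1))) (blinfun_apply (DG (orb F G x k)) v) = v"
    and subS: "\<And>k. subspace (Es k)" and subU: "\<And>k. subspace (Eu k)"
    and disj: "\<And>k. Es k \<inter> Eu k = {0}"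
    and spanSU: "\<And>k v. \<exists>a b. a \<in> Es k \<and> b \<in> Eu k \<and> v = a + b"
    and invS: "\<And>k v. v \<in> Es k \<Longrightarrow> blinfun_apply (DF (orb F G x k)) v \<in> Es (k+1)"
    and invU: "\<And>k v. v \<in> Eu k \<Longrightarrow> blinfun_apply (DF (orb F G x k)) v \<in> Eu (k+1)"
    and c1: "1 \<le> c" and lam0: "0 < lam" and eps0: "0 \<le> eps"
    and hs: "\<And>k j v. j > 0 \<Longrightarrow> v \<in> Es k \<Longrightarrow> norm (Dfwd F G DF x k j v) \<le> c * lam ^ j * exp (eps * \<bar>real_of_int k\<bar>) * norm v"
    and hu: "\<And>k j v. j > 0 \<Longrightarrow> v \<in> Eu k \<Longrightarrow> norm (Dbwd F G DG x k j v) \<le> c * lam ^ j * exp (eps * \<bar>real_of_int k\<bar>) * norm v"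
    and hp: "\<And>k v a b. a \<in> Es k \<Longrightarrow> b \<in> Eu k \<Longrightarrow> v = a + b \<Longrightarrow>
              norm a \<le> c * exp (eps * \<bar>real_of_int k\<bar>) * norm v \<and> norm b \<le> c * exp (eps * \<bar>real_of_int k\<bar>) * norm v"
    and mpos: "0 < m" and mn: "m < n"
    and rlt: "lam * exp (2*eps + 1/real n) < 1"
    and am: "2*eps + 1/real n \<le> 1/real m"
begin

abbreviation "A k \<equiv> blinfun_apply (DF (orb F G x k))"
abbreviation "B k \<equiv> blinfun_apply (DG (orb F G x k))"
abbreviation "Phi \<equiv> Dfwd F G DF x"
abbreviation "Psi \<equiv> Dbwd F G DG x"

definition "ps k v = (THE s. s \<in> Es k \<and> v - s \<in> Eu k)"
definition "pu k v = v - ps k v"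

lemma uniq:
  assumes "s \<in> Es k" "v - s \<in> Eu k" "s' \<in> Es k" "v - s' \<in> Eu k"
  shows "s = s'"
proof -
  have "s - s' \<in> Es k" using assms subS subspace_diff by blast
  moreover have "s - s' = (v - s') - (v - s)" by simp
  then have "s - s' \<in> Eu k" using assms subU subspace_diff by metis
  ultimately have "s - s' \<in> {0}" using disj by blast
  then show ?thesis by simp
qed

lemma ps: "ps k v \<in> Es k \<and> v - ps k v \<in> Eu k"
proof -
  obtain a b where ab: "a \<in> Es k" "b \<in> Eu k" "v = a + b" using spanSU by blast
  then have *: "a \<in> Es k \<and> v - a \<in> Eu k" by simp
  show ?thesis unfolding ps_def by (rule theI[of _ a]) (use * uniq[of _ k v a] in blast)+
qed

lemma ps_eq: "s \<in> Es k \<Longrightarrow> v - s \<in> Eu k \<Longrightarrow> ps k v = s"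
  using ps uniq by blast

lemma ps_in: "ps k v \<in> Es k" and pu_in: "pu k v \<in> Eu k"
  using ps unfolding pu_def by auto

lemma ps_add: "ps k (v + w) = ps k v + ps k w"
proof (rule ps_eq)
  show "ps k v + ps k w \<in> Es k" using ps_in subS subspace_add by blast
  have "v + w - (ps k v + ps k w) = (v - ps k v) + (w - ps k w)" by simp
  then show "v + w - (ps k v + ps k w) \<in> Eu k" using ps subU subspace_add by metis
qed

lemma ps_scale: "ps k (a *\<^sub>R v) = a *\<^sub>R ps k v"
proof (rule ps_eq)
  show "a *\<^sub>R ps k v \<in> Es k" using ps_in subS subspace_scale by blast
  have "a *\<^sub>R v - a *\<^sub>R ps k v = a *\<^sub>R (v - ps k v)" by (simp add: scaleR_diff_right)
  then show "a *\<^sub>R v - a *\<^sub>R ps k v \<in> Eu k" using ps subU subspace_scale by metis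
qed

lemma ps_diff: "ps k (v - w) = ps k v - ps k w"
  using ps_add[of k v "-w"] ps_scale[of k "-1" w] by simp

lemma pu_add: "pu k (v + w) = pu k v + pu k w"
  unfolding pu_def ps_add by simp
lemma pu_scale: "pu k (a *\<^sub>R v) = a *\<^sub>R pu k v"
  unfolding pu_def ps_scale by (simp add: scaleR_diff_right)
lemma pu_diff: "pu k (v - w) = pu k v - pu k w"
  unfolding pu_def ps_diff by simp

lemma ps_A: "ps k (A (k-1) v) = A (k-1) (ps (k-1) v)"
proof (rule ps_eq)
  show "A (k-1) (ps (k-1) v) \<in> Es k" using invS[OF ps_in, of "k-1" v] by simp
  have "A (k-1) v - A (k-1) (ps (k-1) v) = A (k-1) (v - ps (k-1) v)"
    by (simp add: blinfun.diff_right)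
  then show "A (k-1) v - A (k-1) (ps (k-1) v) \<in> Eu k"
    using invU[of "v - ps (k-1) v" "k-1"] ps by simp
qed

lemma pu_A: "pu k (A (k-1) v) = A (k-1) (pu (k-1) v)"
  unfolding pu_def ps_A by (simp add: blinfun.diff_right)

lemma ps_bound: "norm (ps k v) \<le> c * exp (eps * \<bar>real_of_int k\<bar>) * norm v"
  using hp[of "ps k v" k "v - ps k v" v] ps by simp
lemma pu_bound: "norm (pu k v) \<le> c * exp (eps * \<bar>real_of_int k\<bar>) * norm v"
  using hp[of "ps k v" k "v - ps k v" v] ps unfolding pu_def by simp

lemma Phi_lin: "linear (Phi k j)"
proof (induction j)
  case 0 show ?case by (simp add: linear_iff)
next
  case (Suc j)
  have "linear (blinfun_apply f)" for f :: "(real^'d) \<Rightarrow>\<^sub>L (real^'d)"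
    by (rule bounded_linear.linear[OF blinfun.bounded_linear_right])
  then have "linear (blinfun_apply f \<circ> Phi k j)" for f :: "(real^'d) \<Rightarrow>\<^sub>L (real^'d)"
    using linear_compose[OF Suc.IH] by blast
  then show ?case by (simp add: o_def)
qed

lemma Psi_lin: "linear (Psi k j)"
proof (induction j)
  case 0 show ?case by (simp add: linear_iff)
next
  case (Suc j)
  have "linear (blinfun_apply f)" for f :: "(real^'d) \<Rightarrow>\<^sub>L (real^'d)"
    by (rule bounded_linear.linear[OF blinfun.bounded_linear_right])
  then have "linear (blinfun_apply f \<circ> Psi k j)" for f :: "(real^'d) \<Rightarrow>\<^sub>L (real^'d)"
    using linear_compose[OF Suc.IH] by blast
  then show ?case by (simp add: o_def)
qed

lemma Phi_shift: "Phi (i - 1) (Suc j) v = Phi i j (A (i-1) v)"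
proof (induction j)
  case 0 then show ?case by simp
next
  case (Suc j)
  have "i - 1 + int (Suc j) = i + int j" by simp
  then show ?case using Suc by simp
qed

lemma Psi_shift: "Psi i (Suc j) v = Psi (i - 1) j (B i v)"
proof (induction j)
  case 0 then show ?case by simp
next
  case (Suc j)
  show ?case using Suc by (simp add: diff_diff_eq)
qed

lemma Phi_bound: assumes vE: "v \<in> Es i" shows "norm (Phi i j v) \<le> c * lam ^ j * exp (eps * \<bar>real_of_int i\<bar>) * norm v"
proof (cases "j = 0")
  case True
  have e1: "1 \<le> exp (eps * \<bar>real_of_int i\<bar>)" using eps0 by simp
  have "1 \<le> c * exp (eps * \<bar>real_of_int i\<bar>)" using mult_mono[OF c1 e1] c1 by simp
  then show ?thesis using True by (simp add: mult_le_cancel_right1)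
next
  case False then show ?thesis using hs vE by simp
qed

end


lemma Xsp_bound:
  assumes "\<eta> \<in> Xsp n"
  shows "norm (\<eta> i) \<le> wnorm n \<eta> * exp (\<bar>real_of_int i\<bar> / real n)"
proof -
  have "exp (- \<bar>real_of_int i\<bar> / real n) * norm (\<eta> i) \<le> wnorm n \<eta>"
    unfolding wnorm_def using assms unfolding Xsp_def by (intro cSUP_upper) auto
  then have "exp (\<bar>real_of_int i\<bar> / real n) * (exp (- \<bar>real_of_int i\<bar> / real n) * norm (\<eta> i))
     \<le> exp (\<bar>real_of_int i\<bar> / real n) * wnorm n \<eta>" by (simp add: mult_left_mono)
  moreover have eq: "exp (\<bar>real_of_int i\<bar> / real n) * exp (- \<bar>real_of_int i\<bar> / real n) = 1"
    by (simp add: exp_minus[symmetric] exp_add[symmetric])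
  moreover have "exp (\<bar>real_of_int i\<bar> / real n) * (exp (- \<bar>real_of_int i\<bar> / real n) * norm (\<eta> i)) = norm (\<eta> i)"
    by (metis eq mult.assoc mult_1)
  ultimately show ?thesis by (metis mult.commute)
qed

lemma est1:
  fixes c W L E X nv ns ne :: real
  assumes "0 \<le> c" "0 \<le> L" "0 \<le> E" "nv \<le> c * L * E * ns" "ns \<le> c * E * ne" "ne \<le> W * X"
  shows "nv \<le> c^2 * W * L * (E * E * X)"
proof -
  have "c * L * E * ns \<le> c * L * E * (c * E * ne)"
    using assms by (intro mult_left_mono) auto
  also have "\<dots> \<le> c * L * E * (c * E * (W * X))"
    using assms by (intro mult_left_mono) auto
  also have "c * L * E * (c * E * (W * X)) = c^2 * W * L * (E * E * X)"
    by (simp add: power2_eq_square mult_ac)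
  finally show ?thesis using assms(4) by linarith
qed

context hyp begin

definition "aa = 2*eps + 1/real n"
definition "rr = lam * exp aa"

definition "fs \<eta> k j = Phi (k - int j) j (ps (k - int j) (\<eta> (k - int j)))"
definition "gs \<eta> k j = Psi (k + int j + 1) (Suc j) (pu (k + int j + 1) (\<eta> (k + int j + 1)))"
definition "Ups \<eta> = (\<lambda>k. suminf (fs \<eta> k) - suminf (gs \<eta> k))"

lemma npos: "0 < real n" using mn by simp

lemma rr0: "0 < rr" and rr1: "rr < 1" and aa0: "0 < aa"
  using lam0 rlt eps0 npos unfolding rr_def aa_def by (auto intro: add_nonneg_pos)

lemma c0: "0 \<le> c" using c1 by simp

lemma exp_shift:
  assumes "\<bar>i\<bar> \<le> \<bar>k\<bar> + int j"
  shows "exp (aa * \<bar>real_of_int i\<bar>) \<le> exp aa ^ j * exp (aa * \<bar>real_of_int k\<bar>)"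
proof -
  have "aa * \<bar>real_of_int i\<bar> \<le> aa * (\<bar>real_of_int k\<bar> + real j)"
    using assms aa0 by (intro mult_left_mono) linarith+
  then have "exp (aa * \<bar>real_of_int i\<bar>) \<le> exp (aa * (\<bar>real_of_int k\<bar> + real j))" by simp
  also have "\<dots> = exp aa ^ j * exp (aa * \<bar>real_of_int k\<bar>)"
    by (simp add: distrib_left exp_add exp_of_nat_mult[symmetric] mult.commute)
  finally show ?thesis .
qed

lemma eee: "exp (eps * t) * exp (eps * t) * exp (t / real n) = exp (aa * t)"
  unfolding aa_def by (simp add: exp_add[symmetric] algebra_simps)

lemma fs_bound:
  assumes Wb: "\<And>i. norm (\<eta> i) \<le> W * exp (\<bar>real_of_int i\<bar> / real n)"
  shows "norm (fs \<eta> k j) \<le> c^2 * W * exp (aa * \<bar>real_of_int k\<bar>) * rr ^ j"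
proof -
  define i where "i = k - int j"
  have "norm (fs \<eta> k j) \<le> c^2 * W * lam^j * (exp (eps * \<bar>real_of_int i\<bar>) * exp (eps * \<bar>real_of_int i\<bar>) * exp (\<bar>real_of_int i\<bar> / real n))"
    unfolding fs_def i_def[symmetric]
    by (rule est1[OF c0 _ _ Phi_bound[OF ps_in] ps_bound Wb]) (use lam0 in auto)
  also have "\<dots> = c^2 * W * lam^j * exp (aa * \<bar>real_of_int i\<bar>)" by (simp add: eee)
  also have "\<dots> \<le> c^2 * W * lam^j * (exp aa ^ j * exp (aa * \<bar>real_of_int k\<bar>))"
  proof -
    have W0: "0 \<le> W" using Wb[of 0] by simp (meson norm_ge_zero order_trans)
    show ?thesis using W0 lam0 by (intro mult_left_mono exp_shift) (auto simp: i_def)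
  qed
  also have "\<dots> = c^2 * W * exp (aa * \<bar>real_of_int k\<bar>) * rr ^ j"
    by (simp add: rr_def power_mult_distrib)
  finally show ?thesis .
qed

lemma gs_bound:
  assumes Wb: "\<And>i. norm (\<eta> i) \<le> W * exp (\<bar>real_of_int i\<bar> / real n)"
  shows "norm (gs \<eta> k j) \<le> c^2 * W * exp (aa * \<bar>real_of_int k\<bar>) * rr ^ j"
proof -
  define i where "i = k + int j + 1"
  have W0: "0 \<le> W" using Wb[of 0] by simp (meson norm_ge_zero order_trans)
  have "norm (gs \<eta> k j) \<le> c^2 * W * lam^(Suc j) * (exp (eps * \<bar>real_of_int i\<bar>) * exp (eps * \<bar>real_of_int i\<bar>) * exp (\<bar>real_of_int i\<bar> / real n))"
    unfolding gs_def i_def[symmetric]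
    by (rule est1[OF c0 _ _ hu[OF _ pu_in] pu_bound Wb]) (use lam0 in auto)
  also have "\<dots> = c^2 * W * lam^(Suc j) * exp (aa * \<bar>real_of_int i\<bar>)" by (simp add: eee)
  also have "\<dots> \<le> c^2 * W * lam^(Suc j) * (exp aa ^ (Suc j) * exp (aa * \<bar>real_of_int k\<bar>))"
    using W0 lam0 by (intro mult_left_mono exp_shift) (auto simp: i_def)
  also have "\<dots> = c^2 * W * exp (aa * \<bar>real_of_int k\<bar>) * rr ^ (Suc j)"
    by (simp add: rr_def power_mult_distrib)
  also have "\<dots> \<le> c^2 * W * exp (aa * \<bar>real_of_int k\<bar>) * rr ^ j"
    using W0 rr0 rr1 by (intro mult_left_mono) (auto simp: power_Suc2 mult_le_cancel_left1)
  finally show ?thesis .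
qed

end


context hyp begin

definition "KK W k = c^2 * W * exp (aa * \<bar>real_of_int k\<bar>)"

lemma geo_summ: "summable (\<lambda>j. K * rr^j)"
  by (rule summable_mult) (use summable_geometric[of rr] rr0 rr1 in auto)

lemma geo_sum: "(\<Sum>j. K * rr^j) = K / (1 - rr)"
  using suminf_mult[OF summable_geometric[of rr], of K] suminf_geometric[of rr] rr0 rr1 by auto

lemma geo_lim: "(\<lambda>j. K * rr^j) \<longlonglongrightarrow> 0"
  by (rule tendsto_mult_right_zero) (use LIMSEQ_power_zero[of rr] rr0 rr1 in auto)

context
  fixes \<eta> :: "int \<Rightarrow> real^'d" and W :: real
  assumes Wb: "\<And>i. norm (\<eta> i) \<le> W * exp (\<bar>real_of_int i\<bar> / real n)"
begin

lemma fsb: "norm (fs \<eta> k j) \<le> KK W k * rr ^ j"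
  using fs_bound[OF Wb] unfolding KK_def .
lemma gsb: "norm (gs \<eta> k j) \<le> KK W k * rr ^ j"
  using gs_bound[OF Wb] unfolding KK_def .

lemma fs_summ: "summable (fs \<eta> k)"
  by (rule summable_comparison_test[OF _ geo_summ]) (use fsb in blast)
lemma gs_summ: "summable (gs \<eta> k)"
  by (rule summable_comparison_test[OF _ geo_summ]) (use gsb in blast)

lemma fs_lim: "fs \<eta> k \<longlonglongrightarrow> 0"
  by (rule Lim_null_comparison[OF _ geo_lim[of "KK W k"]]) (use fsb in auto)
lemma gs_lim: "gs \<eta> k \<longlonglongrightarrow> 0"
  by (rule Lim_null_comparison[OF _ geo_lim[of "KK W k"]]) (use gsb in auto)

lemma fs_norm: "norm (suminf (fs \<eta> k)) \<le> KK W k / (1 - rr)"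
  using norm_suminf_le[OF fsb geo_summ] geo_sum by simp
lemma gs_norm: "norm (suminf (gs \<eta> k)) \<le> KK W k / (1 - rr)"
  using norm_suminf_le[OF gsb geo_summ] geo_sum by simp

lemma Ups_norm: "norm (Ups \<eta> k) \<le> 2 * KK W k / (1 - rr)"
proof -
  have "norm (Ups \<eta> k) \<le> norm (suminf (fs \<eta> k)) + norm (suminf (gs \<eta> k))"
    unfolding Ups_def by (rule norm_triangle_ineq4)
  also have "\<dots> \<le> KK W k / (1 - rr) + KK W k / (1 - rr)"
    using fs_norm gs_norm by (rule add_mono)
  finally show ?thesis by simp
qed

lemma W0: "0 \<le> W" using Wb[of 0] by simp (meson norm_ge_zero order_trans)

lemma Ups_wbound: "exp (- \<bar>real_of_int k\<bar> / real m) * norm (Ups \<eta> k) \<le> 2 * c^2 / (1 - rr) * W"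
proof -
  have "exp (- \<bar>real_of_int k\<bar> / real m) * norm (Ups \<eta> k)
      \<le> exp (- \<bar>real_of_int k\<bar> / real m) * (2 * KK W k / (1 - rr))"
    by (rule mult_left_mono[OF Ups_norm]) simp
  also have "\<dots> = (2 * c^2 / (1 - rr) * W) * (exp (- \<bar>real_of_int k\<bar> / real m) * exp (aa * \<bar>real_of_int k\<bar>))"
    unfolding KK_def by (simp add: field_simps)
  also have "\<dots> \<le> (2 * c^2 / (1 - rr) * W) * 1"
  proof (rule mult_left_mono)
    have "aa * \<bar>real_of_int k\<bar> \<le> (1 / real m) * \<bar>real_of_int k\<bar>"
      using am unfolding aa_def by (intro mult_right_mono) auto
    then have "- \<bar>real_of_int k\<bar> / real m + aa * \<bar>real_of_int k\<bar> \<le> 0" by simp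
    then show "exp (- \<bar>real_of_int k\<bar> / real m) * exp (aa * \<bar>real_of_int k\<bar>) \<le> 1"
      by (simp add: exp_add[symmetric])
    show "0 \<le> 2 * c^2 / (1 - rr) * W" using rr1 W0 by simp
  qed
  finally show ?thesis by simp
qed

end

lemma Xsp_Wb: "\<eta> \<in> Xsp n \<Longrightarrow> norm (\<eta> i) \<le> wnorm n \<eta> * exp (\<bar>real_of_int i\<bar> / real n)"
  by (rule Xsp_bound)

lemma Ups_Xsp: "\<eta> \<in> Xsp n \<Longrightarrow> Ups \<eta> \<in> Xsp m"
  unfolding Xsp_def[of m] using Ups_wbound[OF Xsp_Wb]
  by (auto intro!: bdd_aboveI2)

lemma Ups_wnorm: "\<eta> \<in> Xsp n \<Longrightarrow> wnorm m (Ups \<eta>) \<le> 2 * c^2 / (1 - rr) * wnorm n \<eta>"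
  unfolding wnorm_def[of m] using Ups_wbound[OF Xsp_Wb]
  by (auto intro!: cSUP_least)

end


context hyp begin

lemma fs_add: "fs (\<lambda>k. \<eta> k + \<zeta> k) k j = fs \<eta> k j + fs \<zeta> k j"
  unfolding fs_def ps_add linear_add[OF Phi_lin] ..
lemma gs_add: "gs (\<lambda>k. \<eta> k + \<zeta> k) k j = gs \<eta> k j + gs \<zeta> k j"
  unfolding gs_def pu_add linear_add[OF Psi_lin] ..
lemma fs_scale: "fs (\<lambda>k. a *\<^sub>R \<eta> k) k j = a *\<^sub>R fs \<eta> k j"
  unfolding fs_def ps_scale linear_cmul[OF Phi_lin] ..
lemma gs_scale: "gs (\<lambda>k. a *\<^sub>R \<eta> k) k j = a *\<^sub>R gs \<eta> k j"
  unfolding gs_def pu_scale linear_cmul[OF Psi_lin] ..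

lemma Ups_add:
  assumes "\<eta> \<in> Xsp n" "\<zeta> \<in> Xsp n"
  shows "Ups (\<lambda>k. \<eta> k + \<zeta> k) = (\<lambda>k. Ups \<eta> k + Ups \<zeta> k)"
proof
  fix k
  have s: "summable (fs \<eta> k)" "summable (fs \<zeta> k)" "summable (gs \<eta> k)" "summable (gs \<zeta> k)"
    using fs_summ[OF Xsp_Wb[OF assms(1)]] fs_summ[OF Xsp_Wb[OF assms(2)]]
      gs_summ[OF Xsp_Wb[OF assms(1)]] gs_summ[OF Xsp_Wb[OF assms(2)]] by auto
  show "Ups (\<lambda>k. \<eta> k + \<zeta> k) k = Ups \<eta> k + Ups \<zeta> k"
    unfolding Ups_def fs_add gs_add suminf_add[OF s(1,2), symmetric] suminf_add[OF s(3,4), symmetric]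
    by simp
qed

lemma Ups_scale:
  assumes "\<eta> \<in> Xsp n"
  shows "Ups (\<lambda>k. a *\<^sub>R \<eta> k) = (\<lambda>k. a *\<^sub>R Ups \<eta> k)"
proof
  fix k
  have s: "summable (fs \<eta> k)" "summable (gs \<eta> k)"
    using fs_summ[OF Xsp_Wb[OF assms(1)]] gs_summ[OF Xsp_Wb[OF assms(1)]] by auto
  show "Ups (\<lambda>k. a *\<^sub>R \<eta> k) k = a *\<^sub>R Ups \<eta> k"
    unfolding Ups_def fs_scale gs_scale suminf_scaleR_right[OF s(1), symmetric]
      suminf_scaleR_right[OF s(2), symmetric] by (simp add: scaleR_diff_right)
qed

lemma fs_step: "A (k-1) (fs \<eta> (k-1) j) = fs \<eta> k (Suc j)"
proof -
  have e: "k - int (Suc j) = k - 1 - int j" by simp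
  show ?thesis unfolding fs_def e by (simp add: algebra_simps)
qed

lemma gs_step: "A (k-1) (gs \<eta> (k-1) j) = Psi (k + int j) j (pu (k + int j) (\<eta> (k + int j)))"
proof -
  have e: "k - 1 + int j + 1 = k + int j" by simp
  have e2: "k + int j - int j = k" by simp
  show ?thesis unfolding gs_def e using inv2[of k] by (simp add: e2)
qed

lemma Gamma_Ups:
  assumes "\<eta> \<in> Xsp n"
  shows "Gamma F G DF x (Ups \<eta>) = \<eta>"
proof
  fix k
  note Wb = Xsp_Wb[OF assms]
  define h where "h j = Psi (k + int j) j (pu (k + int j) (\<eta> (k + int j)))" for j
  have hs: "h (Suc j) = gs \<eta> k j" for j
  proof -
    have "k + int (Suc j) = k + int j + 1" by simp
    then show ?thesis unfolding h_def gs_def by (simp add: ac_simps)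
  qed
  have h0: "h 0 = pu k (\<eta> k)" unfolding h_def by simp
  have bl: "bounded_linear (A (k-1))" by (rule blinfun.bounded_linear_right)
  have S: "A (k-1) (suminf (fs \<eta> (k-1))) = suminf (fs \<eta> k) - ps k (\<eta> k)"
  proof -
    have "A (k-1) (suminf (fs \<eta> (k-1))) = (\<Sum>j. A (k-1) (fs \<eta> (k-1) j))"
      using bounded_linear.suminf[OF bl fs_summ[OF Wb]] by simp
    also have "\<dots> = (\<Sum>j. fs \<eta> k (Suc j))" by (simp add: fs_step)
    also have "\<dots> = suminf (fs \<eta> k) - fs \<eta> k 0" by (rule suminf_split_head[OF fs_summ[OF Wb]])
    finally show ?thesis by (simp add: fs_def)
  qed
  have U: "A (k-1) (suminf (gs \<eta> (k-1))) = pu k (\<eta> k) + suminf (gs \<eta> k)"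
  proof -
    have "A (k-1) (suminf (gs \<eta> (k-1))) = (\<Sum>j. A (k-1) (gs \<eta> (k-1) j))"
      using bounded_linear.suminf[OF bl gs_summ[OF Wb]] by simp
    also have "\<dots> = suminf h" by (simp add: gs_step h_def[abs_def])
    also have "summable h" using gs_summ[OF Wb, of k] summable_Suc_iff[of h] hs by simp
    then have "suminf h = h 0 + (\<Sum>j. h (Suc j))" using suminf_split_head[of h] by simp
    finally show ?thesis using h0 hs by simp
  qed
  have "Gamma F G DF x (Ups \<eta>) k = (suminf (fs \<eta> k) - suminf (gs \<eta> k))
       - (A (k-1) (suminf (fs \<eta> (k-1))) - A (k-1) (suminf (gs \<eta> (k-1))))"
    unfolding Gamma_def Ups_def by (simp add: blinfun.diff_right)
  also have "\<dots> = ps k (\<eta> k) + pu k (\<eta> k)" unfolding S U by simp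
  also have "\<dots> = \<eta> k" unfolding pu_def by simp
  finally show "Gamma F G DF x (Ups \<eta>) k = \<eta> k" .
qed

lemma Ups_Gamma:
  assumes "\<eta> \<in> Xsp n"
  shows "Ups (Gamma F G DF x \<eta>) = \<eta>"
proof
  fix k
  note Wb = Xsp_Wb[OF assms]
  define h where "h j = Psi (k + int j) j (pu (k + int j) (\<eta> (k + int j)))" for j
  have hs: "h (Suc j) = gs \<eta> k j" for j
  proof -
    have "k + int (Suc j) = k + int j + 1" by simp
    then show ?thesis unfolding h_def gs_def by (simp add: ac_simps)
  qed
  have h0: "h 0 = pu k (\<eta> k)" unfolding h_def by simp
  have f1: "fs (Gamma F G DF x \<eta>) k j = fs \<eta> k j - fs \<eta> k (Suc j)" for j
  proof -
    define i where "i = k - int j"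
    have e: "k - int (Suc j) = i - 1" unfolding i_def by simp
    have "fs (Gamma F G DF x \<eta>) k j = Phi i j (ps i (\<eta> i) - A (i-1) (ps (i-1) (\<eta> (i-1))))"
      unfolding fs_def i_def[symmetric] Gamma_def ps_diff ps_A ..
    also have "\<dots> = Phi i j (ps i (\<eta> i)) - Phi (i-1) (Suc j) (ps (i-1) (\<eta> (i-1)))"
      unfolding linear_diff[OF Phi_lin] Phi_shift ..
    finally show ?thesis unfolding fs_def e i_def[symmetric] .
  qed
  have g1: "gs (Gamma F G DF x \<eta>) k j = h (Suc j) - h j" for j
  proof -
    define i where "i = k + int j + 1"
    have e: "i - 1 = k + int j" unfolding i_def by simp
    have "gs (Gamma F G DF x \<eta>) k j = Psi i (Suc j) (pu i (\<eta> i) - A (i-1) (pu (i-1) (\<eta> (i-1))))"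
      unfolding gs_def i_def[symmetric] Gamma_def pu_diff pu_A ..
    also have "\<dots> = Psi i (Suc j) (pu i (\<eta> i)) - Psi (i-1) j (pu (i-1) (\<eta> (i-1)))"
      unfolding linear_diff[OF Psi_lin] Psi_shift inv1 ..
    finally have X: "gs (Gamma F G DF x \<eta>) k j = Psi i (Suc j) (pu i (\<eta> i)) - Psi (i-1) j (pu (i-1) (\<eta> (i-1)))"
      unfolding gs_def i_def[symmetric] .
    have Y: "h j = Psi (i-1) j (pu (i-1) (\<eta> (i-1)))" unfolding e h_def ..
    have Z: "h (Suc j) = Psi i (Suc j) (pu i (\<eta> i))" using hs[of j] unfolding gs_def i_def .
    show ?thesis unfolding X Y Z ..
  qed
  have hl: "h \<longlonglongrightarrow> 0"
    using gs_lim[OF Wb, of k] hs filterlim_sequentially_Suc[of h] by simp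
  have "suminf (fs (Gamma F G DF x \<eta>) k) = fs \<eta> k 0 - 0"
    unfolding f1 using telescope_sums'[OF fs_lim[OF Wb, of k]] by (rule sums_unique[symmetric])
  moreover have "suminf (gs (Gamma F G DF x \<eta>) k) = 0 - h 0"
    unfolding g1 using telescope_sums[OF hl] by (rule sums_unique[symmetric])
  ultimately show "Ups (Gamma F G DF x \<eta>) k = \<eta> k"
    unfolding Ups_def h0 by (simp add: fs_def pu_def)
qed

end


theorem lemma3p6:
  fixes F G :: "real^'d \<Rightarrow> real^'d"
    and DF DG :: "real^'d \<Rightarrow> (real^'d) \<Rightarrow>\<^sub>L (real^'d)"
    and x :: "real^'d" and lam :: real and n m :: nat
  assumes "torus_C1_diffeo F G DF DG"
    and "regularly_hyperbolic F G DF DG lam x"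
    and "0 < m" and "m < n" and "real n > 1 / ln (1 / lam)"
  shows "\<exists>\<Upsilon> :: (int \<Rightarrow> real^'d) \<Rightarrow> (int \<Rightarrow> real^'d).
           (\<forall>\<eta>\<in>Xsp n. \<Upsilon> \<eta> \<in> Xsp m) \<and>
           (\<forall>\<eta>\<in>Xsp n. \<forall>\<zeta>\<in>Xsp n. \<Upsilon> (\<lambda>k. \<eta> k + \<zeta> k) = (\<lambda>k. \<Upsilon> \<eta> k + \<Upsilon> \<zeta> k)) \<and>
           (\<forall>\<eta>\<in>Xsp n. \<forall>a::real. \<Upsilon> (\<lambda>k. a *\<^sub>R \<eta> k) = (\<lambda>k. a *\<^sub>R \<Upsilon> \<eta> k)) \<and>
           (\<exists>C. \<forall>\<eta>\<in>Xsp n. wnorm m (\<Upsilon> \<eta>) \<le> C * wnorm n \<eta>) \<and>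
           (\<forall>\<eta>\<in>Xsp n. \<Upsilon> (Gamma F G DF x \<eta>) = \<eta> \<and> Gamma F G DF x (\<Upsilon> \<eta>) = \<eta>)"
proof -
  have GF: "\<forall>y. G (F y) = y" using assms(1) unfolding torus_C1_diffeo_def by (elim conjE)
  have FG: "\<forall>y. F (G y) = y" using assms(1) unfolding torus_C1_diffeo_def by (elim conjE)
  have dF': "\<forall>y. (F has_derivative blinfun_apply (DF y)) (at y)"
    using assms(1) unfolding torus_C1_diffeo_def by (elim conjE)
  have dG': "\<forall>y. (G has_derivative blinfun_apply (DG y)) (at y)"
    using assms(1) unfolding torus_C1_diffeo_def by (elim conjE)
  note dF = dF'[rule_format] and dG = dG'[rule_format]
  have inv1: "blinfun_apply (DG (orb F G x k)) (blinfun_apply (DF (orb F G x (k-1))) v) = v" for k v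
  proof -
    have "orb F G x k = F (orb F G x (k-1))" using orb_Suc[of F G x "k-1"] FG by simp
    then show ?thesis using deriv_inv[OF GF dF dG] by simp
  qed
  have inv2: "blinfun_apply (DF (orb F G x (k-1))) (blinfun_apply (DG (orb F G x k)) v) = v" for k v
  proof -
    have "orb F G x (k-1) = G (orb F G x k)" using orb_pred[of G F x k] GF FG by simp
    then show ?thesis using deriv_inv[OF FG dG dF] by simp
  qed
  have lam0: "0 < lam" using assms(2) unfolding regularly_hyperbolic_def by (elim conjE)
  have lam1: "lam < 1" using assms(2) unfolding regularly_hyperbolic_def by (elim conjE)
  obtain Es Eu :: "int \<Rightarrow> (real^'d) set" and e0 :: real where
    E1: "\<forall>k. subspace (Es k) \<and> subspace (Eu k) \<and> Es k \<inter> Eu k = {0} \<and>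
            {a + b | a b. a \<in> Es k \<and> b \<in> Eu k} = UNIV"
    and E2: "\<forall>k. blinfun_apply (DF (orb F G x k)) ` Es k = Es (k + 1)"
    and E3: "\<forall>k. blinfun_apply (DF (orb F G x k)) ` Eu k = Eu (k + 1)"
    and e0: "e0 > 0" and H: "\<forall>\<epsilon>. 0 < \<epsilon> \<and> \<epsilon> < e0 \<longrightarrow> (\<exists>c. \<forall>k::int.
          (\<forall>j>0. \<forall>\<eta>\<in>Es k. norm (Dfwd F G DF x k j \<eta>) \<le> c * lam ^ j * exp (\<epsilon> * \<bar>real_of_int k\<bar>) * norm \<eta>) \<and>
          (\<forall>j>0. \<forall>\<eta>\<in>Eu k. norm (Dbwd F G DG x k j \<eta>) \<le> c * lam ^ j * exp (\<epsilon> * \<bar>real_of_int k\<bar>) * norm \<eta>) \<and>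
          (\<forall>\<eta> \<eta>s \<eta>u. \<eta>s \<in> Es k \<longrightarrow> \<eta>u \<in> Eu k \<longrightarrow> \<eta> = \<eta>s + \<eta>u \<longrightarrow>
              norm \<eta>s \<le> c * exp (\<epsilon> * \<bar>real_of_int k\<bar>) * norm \<eta> \<and>
              norm \<eta>u \<le> c * exp (\<epsilon> * \<bar>real_of_int k\<bar>) * norm \<eta>))"
    using assms(2) unfolding regularly_hyperbolic_def by (elim exE conjE) (rule that)
  define L where "L = ln (1 / lam)"
  have L0: "0 < L" unfolding L_def using lam0 lam1 by simp
  have npos: "0 < real n" using assms(4) by simp
  have Ln: "1 / real n < L"
  proof -
    have "1 < real n * L" using assms(5) L0 unfolding L_def[symmetric] by (simp add: field_simps)
    then show ?thesis using npos by (simp add: field_simps)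
  qed
  have mn: "1 / real n < 1 / real m" using assms(3,4) by (simp add: frac_less2)
  define eps where "eps = min (e0/2) (min ((L - 1/real n)/4) ((1/real m - 1/real n)/4))"
  have ep: "eps \<le> e0/2" "eps \<le> (L - 1/real n)/4" "eps \<le> (1/real m - 1/real n)/4" unfolding eps_def
    by (meson min.cobounded1 min.cobounded2 order_trans)+
  have eps00: "0 < eps" unfolding eps_def using e0 Ln mn by simp
  have eps01: "eps < e0" using ep(1) e0 by linarith
  note eps0 = eps00 eps01
  have eps1a: "2*eps + 1/real n < L" using ep(2) Ln eps00 by (simp add: field_simps)
  have eps1b: "2*eps + 1/real n \<le> 1/real m" using ep(3) mn eps00 by (simp add: field_simps)
  have rlt: "lam * exp (2*eps + 1/real n) < 1"
  proof -
    have "exp (2*eps + 1/real n) < exp L" using eps1a by simp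
    also have "exp L = 1 / lam" unfolding L_def using lam0 by simp
    finally show ?thesis using lam0 by (simp add: field_simps)
  qed
  from H eps0 obtain c where Hc: "\<forall>k::int.
          (\<forall>j>0. \<forall>\<eta>\<in>Es k. norm (Dfwd F G DF x k j \<eta>) \<le> c * lam ^ j * exp (eps * \<bar>real_of_int k\<bar>) * norm \<eta>) \<and>
          (\<forall>j>0. \<forall>\<eta>\<in>Eu k. norm (Dbwd F G DG x k j \<eta>) \<le> c * lam ^ j * exp (eps * \<bar>real_of_int k\<bar>) * norm \<eta>) \<and>
          (\<forall>\<eta> \<eta>s \<eta>u. \<eta>s \<in> Es k \<longrightarrow> \<eta>u \<in> Eu k \<longrightarrow> \<eta> = \<eta>s + \<eta>u \<longrightarrow>
              norm \<eta>s \<le> c * exp (eps * \<bar>real_of_int k\<bar>) * norm \<eta> \<and>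
              norm \<eta>u \<le> c * exp (eps * \<bar>real_of_int k\<bar>) * norm \<eta>)" by blast
  define c1 where "c1 = max 1 \<bar>c\<bar>"
  have cc: "c \<le> c1" "1 \<le> c1" unfolding c1_def by auto
  have mono4: "c * p * e * q \<le> c1 * p * e * q" if "0 \<le> p" "0 \<le> e" "0 \<le> q" for p e q
    using cc that by (intro mult_right_mono) auto
  have mono3: "c * e * q \<le> c1 * e * q" if "0 \<le> e" "0 \<le> q" for e q
    using cc that by (intro mult_right_mono) auto
  interpret hyp F G DF DG x lam eps c1 n m Es Eu
  proof
    show "\<And>k v. blinfun_apply (DG (orb F G x k)) (blinfun_apply (DF (orb F G x (k-1))) v) = v" by (rule inv1)
    show "\<And>k v. blinfun_apply (DF (orb F G x (k-1))) (blinfun_apply (DG (orb F G x k)) v) = v" by (rule inv2)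
    show "\<And>k. subspace (Es k)" "\<And>k. subspace (Eu k)" "\<And>k. Es k \<inter> Eu k = {0}" using E1 by auto
    show "\<And>k v. \<exists>a b. a \<in> Es k \<and> b \<in> Eu k \<and> v = a + b"
    proof -
      fix k v
      have "v \<in> {a + b | a b. a \<in> Es k \<and> b \<in> Eu k}" using E1 by auto
      then show "\<exists>a b. a \<in> Es k \<and> b \<in> Eu k \<and> v = a + b" by blast
    qed
    show "\<And>k v. v \<in> Es k \<Longrightarrow> blinfun_apply (DF (orb F G x k)) v \<in> Es (k+1)" using E2 by blast
    show "\<And>k v. v \<in> Eu k \<Longrightarrow> blinfun_apply (DF (orb F G x k)) v \<in> Eu (k+1)" using E3 by blast
    show "1 \<le> c1" by (rule cc)
    show "0 < lam" by (rule lam0)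
    show "0 \<le> eps" using eps0 by simp
    show "norm (Dfwd F G DF x k j v) \<le> c1 * lam ^ j * exp (eps * \<bar>real_of_int k\<bar>) * norm v"
      if "j > 0" "v \<in> Es k" for k j v
    proof -
      have "norm (Dfwd F G DF x k j v) \<le> c * lam ^ j * exp (eps * \<bar>real_of_int k\<bar>) * norm v"
        using Hc that by blast
      also have "\<dots> \<le> c1 * lam ^ j * exp (eps * \<bar>real_of_int k\<bar>) * norm v"
        using lam0 by (intro mono4) auto
      finally show ?thesis .
    qed
    show "norm (Dbwd F G DG x k j v) \<le> c1 * lam ^ j * exp (eps * \<bar>real_of_int k\<bar>) * norm v"
      if "j > 0" "v \<in> Eu k" for k j v
    proof -
      have "norm (Dbwd F G DG x k j v) \<le> c * lam ^ j * exp (eps * \<bar>real_of_int k\<bar>) * norm v"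
        using Hc that by blast
      also have "\<dots> \<le> c1 * lam ^ j * exp (eps * \<bar>real_of_int k\<bar>) * norm v"
        using lam0 by (intro mono4) auto
      finally show ?thesis .
    qed
    show "\<And>k v a b. a \<in> Es k \<Longrightarrow> b \<in> Eu k \<Longrightarrow> v = a + b \<Longrightarrow>
              norm a \<le> c1 * exp (eps * \<bar>real_of_int k\<bar>) * norm v \<and> norm b \<le> c1 * exp (eps * \<bar>real_of_int k\<bar>) * norm v"
    proof -
      fix k v a b assume ab: "a \<in> Es k" "b \<in> Eu k" "v = a + b"
      have "norm a \<le> c * exp (eps * \<bar>real_of_int k\<bar>) * norm v \<and> norm b \<le> c * exp (eps * \<bar>real_of_int k\<bar>) * norm v"
        using Hc ab by blast
      moreover have "c * exp (eps * \<bar>real_of_int k\<bar>) * norm v \<le> c1 * exp (eps * \<bar>real_of_int k\<bar>) * norm v"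
        by (intro mono3) auto
      ultimately show "norm a \<le> c1 * exp (eps * \<bar>real_of_int k\<bar>) * norm v \<and> norm b \<le> c1 * exp (eps * \<bar>real_of_int k\<bar>) * norm v"
        by linarith
    qed
    show "0 < m" "m < n" by (rule assms(3), rule assms(4))
    show "lam * exp (2*eps + 1/real n) < 1" by (rule rlt)
    show "2*eps + 1/real n \<le> 1/real m" by (rule eps1b)
  qed
  show ?thesis
  proof (rule exI[of _ Ups], intro conjI ballI allI)
    show "\<exists>C. \<forall>\<eta>\<in>Xsp n. wnorm m (Ups \<eta>) \<le> C * wnorm n \<eta>"
      using Ups_wnorm by blast
  qed (auto simp: Ups_Xsp Ups_add Ups_scale Ups_Gamma Gamma_Ups)
qed


end
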